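(* The set $X^{\mathcal B}=\{x^{\mathbf b}:\mathbf b\in\mathcal B\}$ is a basis of the $\mathbb C$-vector space $\mathcal W_0$.
   Context: Let $A=\{\mathbf a_1,\dots,\mathbf a_m\}\subseteq\mathbb Z^n$ be linearly independent over $\mathbb R$ and $\ell_1,\dots,\ell_m$ positive integers (part of a relation $\ell_0\mathbf a_0=\sum_j\ell_j\mathbf a_j$, $\ell_0=\sum_j\ell_j$, $\mathbf a_0\in\mathbb Z^n$, $\gcd(\ell_0,\dots,\ell_m)=1$). Let $f_0=\sum_{j=1}^m\ell_jx^{\mathbf a_j}$. Let $V$ be the real span of $A$, $V_{\mathbb Z}=V\cap\mathbb Z^n$, $C(A)$ the real cone generated by $A$, $M=V_{\mathbb Z}\cap C(A)$. Let $S_0$ be the $\mathbb C$-span of $\{x^u:u\in M\}$, $D_{i,0}=x_i\partial/\partial x_i+x_i\partial f_0/\partial x_i$ ($i=1,\dots,n$), and $\mathcal W_0=S_0/\sum_iD_{i,0}S_0$. Let $P(A)=\{\sum_jc_j\mathbf a_j:0\le c_j<1\}$ and $\mathcal B=V_{\mathbb Z}\cap P(A)$. *)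

theory Defs
  imports "HOL-Analysis.Analysis"
begin

text \<open>Exponent vectors live in int^'n (n = CARD('n)); the vectors a_1..a_m are
  given by a :: nat => int^'n on the index set {1..m}. Laurent polynomials are
  finitely supported coefficient functions int^'n => complex.\<close>

definition realvec :: "int^'n \<Rightarrow> real^'n" where
  "realvec u = (\<chi> i. real_of_int (u $ i))"

definition lin_indep_family :: "nat \<Rightarrow> (nat \<Rightarrow> int^'n) \<Rightarrow> bool" where
  "lin_indep_family m a \<longleftrightarrow>
     (\<forall>c::nat \<Rightarrow> real. (\<Sum>j=1..m. c j *\<^sub>R realvec (a j)) = 0 \<longrightarrow> (\<forall>j\<in>{1..m}. c j = 0))"

definition VZ :: "nat \<Rightarrow> (nat \<Rightarrow> int^'n) \<Rightarrow> (int^'n) set" where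
  "VZ m a = {u. realvec u \<in> span (realvec ` a ` {1..m})}"

definition coneA :: "nat \<Rightarrow> (nat \<Rightarrow> int^'n) \<Rightarrow> (real^'n) set" where
  "coneA m a = {v. \<exists>c::nat \<Rightarrow> real. (\<forall>j\<in>{1..m}. 0 \<le> c j) \<and> v = (\<Sum>j=1..m. c j *\<^sub>R realvec (a j))}"

definition parA :: "nat \<Rightarrow> (nat \<Rightarrow> int^'n) \<Rightarrow> (real^'n) set" where
  "parA m a = {v. \<exists>c::nat \<Rightarrow> real. (\<forall>j\<in>{1..m}. 0 \<le> c j \<and> c j < 1) \<and> v = (\<Sum>j=1..m. c j *\<^sub>R realvec (a j))}"

definition monoidM :: "nat \<Rightarrow> (nat \<Rightarrow> int^'n) \<Rightarrow> (int^'n) set" where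
  "monoidM m a = {u \<in> VZ m a. realvec u \<in> coneA m a}"

definition setB :: "nat \<Rightarrow> (nat \<Rightarrow> int^'n) \<Rightarrow> (int^'n) set" where
  "setB m a = {u \<in> VZ m a. realvec u \<in> parA m a}"

definition S0 :: "nat \<Rightarrow> (nat \<Rightarrow> int^'n) \<Rightarrow> (int^'n \<Rightarrow> complex) set" where
  "S0 m a = {g. finite {u. g u \<noteq> 0} \<and> {u. g u \<noteq> 0} \<subseteq> monoidM m a}"

definition mono :: "int^'n \<Rightarrow> (int^'n \<Rightarrow> complex)" where
  "mono b = (\<lambda>w. if w = b then 1 else 0)"

text \<open>D_{i,0} = x_i d/dx_i + x_i (d f_0/d x_i), f_0 = sum_j l_j x^{a_j}, acting on
  coefficient functions: the coefficient of x^w in D_{i,0} g is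
  w_i g(w) + sum_j l_j (a_j)_i g(w - a_j).\<close>
definition Dop :: "nat \<Rightarrow> (nat \<Rightarrow> int^'n) \<Rightarrow> (nat \<Rightarrow> nat) \<Rightarrow> 'n \<Rightarrow>
    (int^'n \<Rightarrow> complex) \<Rightarrow> (int^'n \<Rightarrow> complex)" where
  "Dop m a l i g = (\<lambda>w. of_int (w $ i) * g w
      + (\<Sum>j=1..m. of_nat (l j) * of_int (a j $ i) * g (w - a j)))"

definition Dsum :: "nat \<Rightarrow> (nat \<Rightarrow> int^'n) \<Rightarrow> (nat \<Rightarrow> nat) \<Rightarrow> (int^'n \<Rightarrow> complex) set" where
  "Dsum m a l = {(\<lambda>w. \<Sum>i\<in>UNIV. Dop m a l i (g i) w) | g. \<forall>i. g i \<in> S0 m a}"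

definition quotient_basis :: "(int^'n \<Rightarrow> complex) set \<Rightarrow> (int^'n \<Rightarrow> complex) set \<Rightarrow>
    (int^'n) set \<Rightarrow> bool" where
  "quotient_basis S R Bs \<longleftrightarrow> finite Bs \<and>
     (\<forall>g\<in>S. \<exists>c::int^'n \<Rightarrow> complex. (\<lambda>w. g w - (\<Sum>b\<in>Bs. c b * mono b w)) \<in> R) \<and>
     (\<forall>c::int^'n \<Rightarrow> complex. (\<lambda>w. \<Sum>b\<in>Bs. c b * mono b w) \<in> R \<longrightarrow> (\<forall>b\<in>Bs. c b = 0))"

end

theory Submission
  imports Defs
begin

lemma realvec_add: "realvec (u + v) = realvec u + realvec v"
  by (simp add: realvec_def vec_eq_iff)
lemma realvec_diff: "realvec (u - v) = realvec u - realvec v"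
  by (simp add: realvec_def vec_eq_iff)
lemma realvec_comp: "realvec u $ i = real_of_int (u $ i)"
  by (simp add: realvec_def)

lemma lin_expand:
  fixes g :: "real^'n \<Rightarrow> real"
  assumes "linear g"
  shows "g x = (\<Sum>i\<in>UNIV. x $ i * g (axis i 1))"
proof -
  have "g x = g (\<Sum>i\<in>UNIV. (x$i) *s axis i 1)" by (simp add: basis_expansion)
  also have "\<dots> = (\<Sum>i\<in>UNIV. x $ i * g (axis i 1))"
    using assms by (simp add: linear_sum linear_scale scalar_mult_eq_scaleR)
  finally show ?thesis .
qed

lemma dual_exists:
  fixes a :: "nat \<Rightarrow> int^'n"
  assumes indep: "lin_indep_family m a"
  shows "\<exists>f. \<forall>k\<in>{1..m}. linear (f k) \<and> (\<forall>j\<in>{1..m}. f k (realvec (a j)) = (if k = j then 1 else (0::real)))"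
proof -
  let ?S = "realvec ` a ` {1..m}"
  have inj: "inj_on (\<lambda>j. realvec (a j)) {1..m}"
  proof (rule inj_onI, rule ccontr)
    fix j k assume jk: "j \<in> {1..m}" "k \<in> {1..m}" "realvec (a j) = realvec (a k)" "j \<noteq> k"
    define c :: "nat \<Rightarrow> real" where "c x = (if x = j then 1 else 0) - (if x = k then 1 else 0)" for x
    have "(\<Sum>x=1..m. c x *\<^sub>R realvec (a x)) = (\<Sum>x=1..m. (if x = j then 1 else 0) *\<^sub>R realvec (a x)) - (\<Sum>x=1..m. (if x = k then 1 else 0) *\<^sub>R realvec (a x))"
      unfolding c_def by (simp add: scaleR_left_diff_distrib sum_subtractf)
    also have "\<dots> = realvec (a j) - realvec (a k)"
    proof -
      have e: "\<And>x y. (if x = y then 1 else 0) *\<^sub>R realvec (a x) = (if x = y then realvec (a y) else 0)" by simp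
      show ?thesis unfolding e using jk(1,2) by simp
    qed
    also have "\<dots> = 0" using jk by simp
    finally have "c j = 0" using indep jk(1) unfolding lin_indep_family_def by blast
    thus False using jk(4) by (simp add: c_def)
  qed
  have ind: "independent ?S"
  proof -
    have fin: "finite ?S" by simp
    have "\<not> (\<exists>u. (\<exists>v\<in>?S. u v \<noteq> 0) \<and> (\<Sum>v\<in>?S. u v *\<^sub>R v) = 0)"
    proof
      assume "\<exists>u. (\<exists>v\<in>?S. u v \<noteq> 0) \<and> (\<Sum>v\<in>?S. u v *\<^sub>R v) = 0"
      then obtain u v where v: "v \<in> ?S" "u v \<noteq> 0" and s: "(\<Sum>v\<in>?S. u v *\<^sub>R v) = 0" by blast
      have "(\<Sum>v\<in>?S. u v *\<^sub>R v) = (\<Sum>j=1..m. u (realvec (a j)) *\<^sub>R realvec (a j))"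
        using sum.reindex[OF inj, of "\<lambda>v. u v *\<^sub>R v"] by (simp add: image_image)
      with s have "(\<Sum>j=1..m. u (realvec (a j)) *\<^sub>R realvec (a j)) = 0" by simp
      hence "\<forall>j\<in>{1..m}. u (realvec (a j)) = 0"
        using spec[OF indep[unfolded lin_indep_family_def], of "\<lambda>j. u (realvec (a j))"] by simp
      with v show False by auto
    qed
    thus ?thesis using dependent_finite[OF fin] by blast
  qed
  have "\<forall>k. \<exists>g. linear g \<and> (\<forall>x\<in>?S. g x = (if x = realvec (a k) then 1 else (0::real)))"
  proof
    fix k show "\<exists>g. linear g \<and> (\<forall>x\<in>?S. g x = (if x = realvec (a k) then 1 else (0::real)))"
      by (rule linear_independent_extend[OF ind])
  qed
  from choice[OF this] obtain f where f: "\<forall>k. linear (f k) \<and> (\<forall>x\<in>?S. f k x = (if x = realvec (a k) then 1 else (0::real)))"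
    by blast
  show ?thesis
  proof (rule exI[of _ f], intro ballI conjI)
    fix k j assume k: "k \<in> {1..m}" and j: "j \<in> {1..m}"
    show "linear (f k)" using f by blast
    have "f k (realvec (a j)) = (if realvec (a j) = realvec (a k) then 1 else 0)" using f j by blast
    also have "\<dots> = (if k = j then 1 else 0)" using inj_onD[OF inj _ j k] by auto
    finally show "f k (realvec (a j)) = (if k = j then 1 else 0)" .
  qed
qed

locale dualctx =
  fixes m :: nat and a :: "nat \<Rightarrow> int^'n" and l :: "nat \<Rightarrow> nat" and f :: "nat \<Rightarrow> real^'n \<Rightarrow> real"
  assumes lin: "\<And>k. k \<in> {1..m} \<Longrightarrow> linear (f k)"
    and dual: "\<And>j k. j \<in> {1..m} \<Longrightarrow> k \<in> {1..m} \<Longrightarrow> f k (realvec (a j)) = (if k = j then 1 else 0)"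
    and lpos: "\<And>j. j \<in> {1..m} \<Longrightarrow> 0 < l j"
begin

lemma delta_sum:
  fixes v :: "nat \<Rightarrow> 'b::real_vector"
  assumes "k \<in> {1..m}"
  shows "(\<Sum>j=1..m. (if k = j then 1 else 0) *\<^sub>R v j) = v k"
proof -
  have e: "\<And>j. (if k = j then 1 else 0) *\<^sub>R v j = (if k = j then v k else 0)" by simp
  show ?thesis unfolding e using assms by simp
qed

lemma f_sum:
  assumes k: "k \<in> {1..m}"
  shows "f k (\<Sum>j=1..m. c j *\<^sub>R realvec (a j)) = c k"
proof -
  have "f k (\<Sum>j=1..m. c j *\<^sub>R realvec (a j)) = (\<Sum>j=1..m. c j * f k (realvec (a j)))"
    using lin[OF k] by (simp add: linear_sum linear_scale)
  also have "\<dots> = (\<Sum>j=1..m. (if k = j then c j else 0))"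
  proof (rule sum.cong)
    fix j assume j: "j \<in> {1..m}"
    show "c j * f k (realvec (a j)) = (if k = j then c j else 0)" using dual[OF j k] by simp
  qed simp
  also have "\<dots> = c k" using k by simp
  finally show ?thesis .
qed

lemma span_rep:
  assumes "x \<in> span (realvec ` a ` {1..m})"
  shows "x = (\<Sum>j=1..m. f j x *\<^sub>R realvec (a j))"
proof -
  let ?h = "\<lambda>x. x - (\<Sum>j=1..m. f j x *\<^sub>R realvec (a j))"
  have "linear ?h"
  proof (rule linearI)
    fix x y
    have "(\<Sum>j=1..m. f j (x + y) *\<^sub>R realvec (a j)) = (\<Sum>j=1..m. f j x *\<^sub>R realvec (a j) + f j y *\<^sub>R realvec (a j))"
      by (rule sum.cong) (auto simp: linear_add[OF lin] scaleR_add_left)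
    thus "?h (x + y) = ?h x + ?h y" by (simp add: sum.distrib algebra_simps)
  next
    fix c :: real and x
    have "(\<Sum>j=1..m. f j (c *\<^sub>R x) *\<^sub>R realvec (a j)) = (\<Sum>j=1..m. c *\<^sub>R (f j x *\<^sub>R realvec (a j)))"
      by (rule sum.cong) (auto simp: linear_scale[OF lin])
    thus "?h (c *\<^sub>R x) = c *\<^sub>R ?h x" by (simp add: scaleR_sum_right algebra_simps)
  qed
  moreover have "?h y = 0" if "y \<in> realvec ` a ` {1..m}" for y
  proof -
    from that obtain k where k: "k \<in> {1..m}" and y: "y = realvec (a k)" by blast
    have "(\<Sum>j=1..m. f j y *\<^sub>R realvec (a j)) = (\<Sum>j=1..m. (if k = j then 1 else 0) *\<^sub>R realvec (a j))"
    proof (rule sum.cong)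
      fix j assume j: "j \<in> {1..m}"
      show "f j y *\<^sub>R realvec (a j) = (if k = j then 1 else 0) *\<^sub>R realvec (a j)" using dual[OF k j] y by auto
    qed simp
    also have "\<dots> = y" using delta_sum[OF k] y by simp
    finally show ?thesis by simp
  qed
  ultimately have "?h x = 0" using linear_eq_0_on_span assms by blast
  thus ?thesis by simp
qed

lemma VZ_rep: "u \<in> VZ m a \<Longrightarrow> realvec u = (\<Sum>j=1..m. f j (realvec u) *\<^sub>R realvec (a j))"
  unfolding VZ_def using span_rep by blast

lemma VZ_comp: "u \<in> VZ m a \<Longrightarrow> real_of_int (u $ i) = (\<Sum>j=1..m. f j (realvec u) * real_of_int (a j $ i))"
proof -
  assume "u \<in> VZ m a"
  hence "realvec u $ i = (\<Sum>j=1..m. f j (realvec u) *\<^sub>R realvec (a j)) $ i"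
    using arg_cong[where f="\<lambda>v. v $ i", OF VZ_rep] by blast
  thus ?thesis by (simp add: sum_component realvec_comp)
qed

lemma VZ_add: "u \<in> VZ m a \<Longrightarrow> j \<in> {1..m} \<Longrightarrow> u + a j \<in> VZ m a"
  unfolding VZ_def by (simp add: realvec_add span_add span_base)

lemma VZ_diff: "u \<in> VZ m a \<Longrightarrow> j \<in> {1..m} \<Longrightarrow> u - a j \<in> VZ m a"
  unfolding VZ_def by (simp add: realvec_diff span_diff span_base)

lemma f_add: "k \<in> {1..m} \<Longrightarrow> j \<in> {1..m} \<Longrightarrow> f k (realvec (u + a j)) = f k (realvec u) + (if k = j then 1 else 0)"
  by (simp add: realvec_add linear_add[OF lin] dual)

lemma f_diff: "k \<in> {1..m} \<Longrightarrow> j \<in> {1..m} \<Longrightarrow> f k (realvec (u - a j)) = f k (realvec u) - (if k = j then 1 else 0)"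
  by (simp add: realvec_diff linear_diff[OF lin] dual)

lemma cone_iff: "u \<in> VZ m a \<Longrightarrow> realvec u \<in> coneA m a \<longleftrightarrow> (\<forall>j\<in>{1..m}. 0 \<le> f j (realvec u))"
proof
  assume "realvec u \<in> coneA m a"
  then obtain c where c: "\<forall>j\<in>{1..m}. 0 \<le> c j" "realvec u = (\<Sum>j=1..m. c j *\<^sub>R realvec (a j))"
    unfolding coneA_def by blast
  thus "\<forall>j\<in>{1..m}. 0 \<le> f j (realvec u)" using f_sum by auto
next
  assume "u \<in> VZ m a" "\<forall>j\<in>{1..m}. 0 \<le> f j (realvec u)"
  note h = this
  have e: "realvec u = (\<Sum>j=1..m. f j (realvec u) *\<^sub>R realvec (a j))" using VZ_rep h(1) by blast
  show "realvec u \<in> coneA m a" unfolding coneA_def mem_Collect_eq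
    by (rule exI[of _ "\<lambda>j. f j (realvec u)"], rule conjI[OF _ e]) (use h in simp)
qed

lemma par_iff: "u \<in> VZ m a \<Longrightarrow> realvec u \<in> parA m a \<longleftrightarrow> (\<forall>j\<in>{1..m}. 0 \<le> f j (realvec u) \<and> f j (realvec u) < 1)"
proof
  assume "realvec u \<in> parA m a"
  then obtain c where c: "\<forall>j\<in>{1..m}. 0 \<le> c j \<and> c j < 1" "realvec u = (\<Sum>j=1..m. c j *\<^sub>R realvec (a j))"
    unfolding parA_def by blast
  thus "\<forall>j\<in>{1..m}. 0 \<le> f j (realvec u) \<and> f j (realvec u) < 1" using f_sum by auto
next
  assume "u \<in> VZ m a" "\<forall>j\<in>{1..m}. 0 \<le> f j (realvec u) \<and> f j (realvec u) < 1"
  note h = this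
  have e: "realvec u = (\<Sum>j=1..m. f j (realvec u) *\<^sub>R realvec (a j))" using VZ_rep h(1) by blast
  show "realvec u \<in> parA m a" unfolding parA_def mem_Collect_eq
    by (rule exI[of _ "\<lambda>j. f j (realvec u)"], rule conjI[OF _ e]) (use h in simp)
qed

lemma M_iff: "u \<in> monoidM m a \<longleftrightarrow> u \<in> VZ m a \<and> (\<forall>j\<in>{1..m}. 0 \<le> f j (realvec u))"
  unfolding monoidM_def using cone_iff by blast

lemma B_iff: "u \<in> setB m a \<longleftrightarrow> u \<in> VZ m a \<and> (\<forall>j\<in>{1..m}. 0 \<le> f j (realvec u) \<and> f j (realvec u) < 1)"
  unfolding setB_def using par_iff by blast

end

lemma fin_expand:
  assumes "finite F" "{u. g u \<noteq> 0} \<subseteq> F"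
  shows "g w = (\<Sum>u\<in>F. g u * mono u w)"
proof -
  have "(\<Sum>u\<in>F. g u * mono u w) = (\<Sum>u\<in>F. if u = w then g w else 0)"
    by (rule sum.cong) (auto simp: mono_def)
  also have "\<dots> = (if w \<in> F then g w else 0)" using assms(1) by simp
  also have "\<dots> = g w" using assms(2) by auto
  finally show ?thesis by simp
qed

lemma Dop_add: "Dop m a l i (\<lambda>v. g v + h v) w = Dop m a l i g w + Dop m a l i h w"
  unfolding Dop_def by (simp add: algebra_simps sum.distrib)

lemma Dop_scale: "Dop m a l i (\<lambda>v. c * g v) w = c * Dop m a l i g w"
  unfolding Dop_def by (simp add: algebra_simps sum_distrib_left)

lemma Dop_sum:
  assumes "finite X"
  shows "Dop m a l i (\<lambda>v. \<Sum>x\<in>X. c x * h x v) w = (\<Sum>x\<in>X. c x * Dop m a l i (h x) w)"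
  using assms
proof (induction X rule: finite_induct)
  case empty
  then show ?case by (simp add: Dop_def)
next
  case (insert x F)
  have "Dop m a l i (\<lambda>v. \<Sum>y\<in>insert x F. c y * h y v) w = Dop m a l i (\<lambda>v. c x * h x v + (\<Sum>y\<in>F. c y * h y v)) w"
    using insert by simp
  also have "\<dots> = c x * Dop m a l i (h x) w + Dop m a l i (\<lambda>v. \<Sum>y\<in>F. c y * h y v) w"
    by (simp add: Dop_add Dop_scale)
  finally show ?case using insert by simp
qed

lemma S0_0: "(\<lambda>w. 0) \<in> S0 m a"
  unfolding S0_def by simp

lemma S0_add: "g \<in> S0 m a \<Longrightarrow> h \<in> S0 m a \<Longrightarrow> (\<lambda>w. g w + h w) \<in> S0 m a"
proof -
  assume g: "g \<in> S0 m a" and h: "h \<in> S0 m a"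
  have sub: "{u. g u + h u \<noteq> 0} \<subseteq> {u. g u \<noteq> 0} \<union> {u. h u \<noteq> 0}" by auto
  show ?thesis using g h unfolding S0_def
    using finite_subset[OF sub] sub by blast
qed

lemma S0_scale: "g \<in> S0 m a \<Longrightarrow> (\<lambda>w. c * g w) \<in> S0 m a"
proof -
  assume g: "g \<in> S0 m a"
  have sub: "{u. c * g u \<noteq> 0} \<subseteq> {u. g u \<noteq> 0}" by auto
  show ?thesis using g unfolding S0_def
    using finite_subset[OF sub] sub by blast
qed

lemma mono_S0: "u \<in> monoidM m a \<Longrightarrow> mono u \<in> S0 m a"
proof -
  have "{w. mono u w \<noteq> 0} = {u}" by (auto simp: mono_def)
  thus "u \<in> monoidM m a \<Longrightarrow> mono u \<in> S0 m a" unfolding S0_def by simp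
qed

lemma Dsum_iff: "h \<in> Dsum m a l \<longleftrightarrow> (\<exists>G. (\<forall>i. G i \<in> S0 m a) \<and> h = (\<lambda>w. \<Sum>i\<in>UNIV. Dop m a l i (G i) w))"
  unfolding Dsum_def by blast

lemma Dsum_0: "(\<lambda>w. 0) \<in> Dsum m a l"
  unfolding Dsum_iff
  by (rule exI[of _ "\<lambda>i w. 0"]) (simp add: S0_0 Dop_def)

lemma Dsum_add: "g \<in> Dsum m a l \<Longrightarrow> h \<in> Dsum m a l \<Longrightarrow> (\<lambda>w. g w + h w) \<in> Dsum m a l"
proof -
  assume "g \<in> Dsum m a l" "h \<in> Dsum m a l"
  then obtain G H where G: "\<forall>i. G i \<in> S0 m a" "g = (\<lambda>w. \<Sum>i\<in>UNIV. Dop m a l i (G i) w)"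
    and H: "\<forall>i. H i \<in> S0 m a" "h = (\<lambda>w. \<Sum>i\<in>UNIV. Dop m a l i (H i) w)"
    unfolding Dsum_iff by blast
  show ?thesis unfolding Dsum_iff
    by (rule exI[of _ "\<lambda>i w. G i w + H i w"]) (simp add: G H S0_add Dop_add sum.distrib)
qed

lemma Dsum_scale: "g \<in> Dsum m a l \<Longrightarrow> (\<lambda>w. c * g w) \<in> Dsum m a l"
proof -
  assume "g \<in> Dsum m a l"
  then obtain G where G: "\<forall>i. G i \<in> S0 m a" "g = (\<lambda>w. \<Sum>i\<in>UNIV. Dop m a l i (G i) w)"
    unfolding Dsum_iff by blast
  show ?thesis unfolding Dsum_iff
    by (rule exI[of _ "\<lambda>i w. c * G i w"]) (simp add: G S0_scale Dop_scale sum_distrib_left)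
qed

context dualctx begin

lemma key1: "k \<in> {1..m} \<Longrightarrow> (\<Sum>i\<in>UNIV. of_int (u$i) * complex_of_real (f k (axis i 1))) = of_real (f k (realvec u))"
proof -
  assume k: "k \<in> {1..m}"
  have "f k (realvec u) = (\<Sum>i\<in>UNIV. realvec u $ i * f k (axis i 1))" by (rule lin_expand[OF lin[OF k]])
  hence "complex_of_real (f k (realvec u)) = (\<Sum>i\<in>UNIV. of_real (real_of_int (u $ i)) * of_real (f k (axis i 1)))"
    by (simp add: realvec_comp)
  thus ?thesis by simp
qed

lemma Ek_in:
  assumes g: "g \<in> S0 m a" and k: "k \<in> {1..m}"
  shows "(\<lambda>w. complex_of_real (f k (realvec w)) * g w + of_nat (l k) * g (w - a k)) \<in> Dsum m a l"
proof -
  define v where "v i = complex_of_real (f k (axis i 1))" for i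
  have k2: "(\<Sum>i\<in>UNIV. of_int (a j $ i) * v i) = (if k = j then 1 else 0)" if j: "j \<in> {1..m}" for j
    using key1[OF k, of "a j"] dual[OF j k] unfolding v_def by simp
  have eq: "(\<Sum>i\<in>UNIV. Dop m a l i (\<lambda>w. v i * g w) w) = complex_of_real (f k (realvec w)) * g w + of_nat (l k) * g (w - a k)" for w
  proof -
    have "(\<Sum>i\<in>UNIV. Dop m a l i (\<lambda>w. v i * g w) w)
        = (\<Sum>i\<in>UNIV. of_int (w $ i) * v i * g w + (\<Sum>j=1..m. of_nat (l j) * (of_int (a j $ i) * v i) * g (w - a j)))"
      unfolding Dop_def by (simp add: algebra_simps)
    also have "\<dots> = (\<Sum>i\<in>UNIV. of_int (w $ i) * v i) * g w + (\<Sum>i\<in>UNIV. \<Sum>j=1..m. of_nat (l j) * (of_int (a j $ i) * v i) * g (w - a j))"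
      by (simp add: sum.distrib sum_distrib_right)
    also have "(\<Sum>i\<in>UNIV. \<Sum>j=1..m. of_nat (l j) * (of_int (a j $ i) * v i) * g (w - a j))
        = (\<Sum>j=1..m. \<Sum>i\<in>UNIV. of_nat (l j) * (of_int (a j $ i) * v i) * g (w - a j))"
      by (rule sum.swap)
    also have "\<dots> = (\<Sum>j=1..m. of_nat (l j) * (\<Sum>i\<in>UNIV. of_int (a j $ i) * v i) * g (w - a j))"
      by (simp add: sum_distrib_left sum_distrib_right)
    also have "\<dots> = (\<Sum>j=1..m. if k = j then of_nat (l k) * g (w - a k) else 0)"
      by (rule sum.cong) (simp_all add: k2)
    also have "\<dots> = of_nat (l k) * g (w - a k)" using k by simp
    finally show ?thesis using key1[OF k, of w] unfolding v_def by simp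
  qed
  show ?thesis unfolding Dsum_iff
    by (rule exI[of _ "\<lambda>i w. v i * g w"]) (simp add: g S0_scale eq)
qed

end

lemma finite_box: "finite {u::int^'n. \<forall>i. \<bar>u$i\<bar> \<le> r i}"
proof -
  have sub: "{u::int^'n. \<forall>i. \<bar>u$i\<bar> \<le> r i} \<subseteq> (\<lambda>g. \<chi> i. g i) ` (PiE UNIV (\<lambda>i. {-r i..r i}))"
  proof
    fix u :: "int^'n" assume u: "u \<in> {u. \<forall>i. \<bar>u$i\<bar> \<le> r i}"
    have "\<forall>i. u$i \<in> {-r i..r i}"
    proof
      fix i have "\<bar>u$i\<bar> \<le> r i" using u by blast
      thus "u$i \<in> {-r i..r i}" by (simp; arith)
    qed
    hence "(\<lambda>i. u$i) \<in> PiE UNIV (\<lambda>i. {-r i..r i})" by auto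
    moreover have "u = (\<chi> i. (\<lambda>i. u$i) i)" by simp
    ultimately show "u \<in> (\<lambda>g. \<chi> i. g i) ` (PiE UNIV (\<lambda>i. {-r i..r i}))" by blast
  qed
  have fin: "finite (PiE UNIV (\<lambda>i. {-r i..r i}))" by (rule finite_PiE) auto
  show ?thesis by (rule finite_subset[OF sub finite_imageI[OF fin]])
qed

lemma alg_id: "(L::complex) \<noteq> 0 \<Longrightarrow> mu - (- k / L * c) * mb = (1 / L) * (k * mu' + L * mu) + (- k / L) * (mu' - c * mb)"
  by (simp add: field_simps)

context dualctx begin

lemma finite_B: "finite (setB m a)"
proof -
  have "setB m a \<subseteq> {u. \<forall>i. \<bar>u$i\<bar> \<le> (\<Sum>j=1..m. \<bar>a j $ i\<bar>)}"
  proof (safe)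
    fix u i assume "u \<in> setB m a"
    hence uV: "u \<in> VZ m a" and c: "\<forall>j\<in>{1..m}. 0 \<le> f j (realvec u) \<and> f j (realvec u) < 1" using B_iff by auto
    have "\<bar>real_of_int (u $ i)\<bar> = \<bar>\<Sum>j=1..m. f j (realvec u) * real_of_int (a j $ i)\<bar>" using VZ_comp[OF uV] by simp
    also have "\<dots> \<le> (\<Sum>j=1..m. \<bar>f j (realvec u) * real_of_int (a j $ i)\<bar>)" by (rule sum_abs)
    also have "\<dots> \<le> (\<Sum>j=1..m. \<bar>real_of_int (a j $ i)\<bar>)"
    proof (rule sum_mono)
      fix j assume "j \<in> {1..m}"
      hence "0 \<le> f j (realvec u) \<and> f j (realvec u) < 1" using c by blast
      hence "\<bar>f j (realvec u)\<bar> \<le> 1" by simp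
      hence "\<bar>f j (realvec u)\<bar> * \<bar>real_of_int (a j $ i)\<bar> \<le> 1 * \<bar>real_of_int (a j $ i)\<bar>"
        by (rule mult_right_mono) simp
      thus "\<bar>f j (realvec u) * real_of_int (a j $ i)\<bar> \<le> \<bar>real_of_int (a j $ i)\<bar>" by (simp add: abs_mult)
    qed
    finally have "real_of_int \<bar>u $ i\<bar> \<le> real_of_int (\<Sum>j=1..m. \<bar>a j $ i\<bar>)" by simp
    thus "\<bar>u $ i\<bar> \<le> (\<Sum>j=1..m. \<bar>a j $ i\<bar>)" by linarith
  qed
  thus ?thesis by (rule finite_subset[OF _ finite_box])
qed

definition height :: "int^'n \<Rightarrow> nat" where
  "height u = (\<Sum>j=1..m. nat \<lfloor>f j (realvec u)\<rfloor>)"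

lemma mono_red: "u \<in> monoidM m a \<Longrightarrow> \<exists>b\<in>setB m a. \<exists>c. (\<lambda>w. mono u w - c * mono b w) \<in> Dsum m a l"
proof (induction "height u" arbitrary: u rule: less_induct)
  case less
  have uVZ: "u \<in> VZ m a" and upos: "\<forall>j\<in>{1..m}. 0 \<le> f j (realvec u)" using less.prems M_iff by auto
  show ?case
  proof (cases "\<forall>j\<in>{1..m}. f j (realvec u) < 1")
    case True
    then have "u \<in> setB m a" using uVZ upos B_iff by auto
    moreover have "(\<lambda>w. mono u w - 1 * mono u w) \<in> Dsum m a l" using Dsum_0 by simp
    ultimately show ?thesis by blast
  next
    case False
    then obtain k where k: "k \<in> {1..m}" "1 \<le> f k (realvec u)" by (auto simp: not_less)
    define u' where "u' = u - a k"
    have fu': "f j (realvec u') = f j (realvec u) - (if j = k then 1 else 0)" if "j \<in> {1..m}" for j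
      using f_diff[OF that k(1)] u'_def by simp
    have u'M: "u' \<in> monoidM m a"
      unfolding M_iff
    proof (intro conjI ballI)
      show "u' \<in> VZ m a" using VZ_diff[OF uVZ k(1)] u'_def by simp
      fix j assume j: "j \<in> {1..m}"
      show "0 \<le> f j (realvec u')" using fu'[OF j] upos j k(2) by auto
    qed
    have "height u' < height u"
      unfolding height_def
    proof (rule sum_strict_mono_ex1)
      show "finite {1..m}" by simp
      show "\<forall>j\<in>{1..m}. nat \<lfloor>f j (realvec u')\<rfloor> \<le> nat \<lfloor>f j (realvec u)\<rfloor>"
      proof
        fix j assume j: "j \<in> {1..m}"
        have "f j (realvec u') \<le> f j (realvec u)" using fu'[OF j] by auto
        thus "nat \<lfloor>f j (realvec u')\<rfloor> \<le> nat \<lfloor>f j (realvec u)\<rfloor>" by (intro nat_mono floor_mono)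
      qed
      have f1: "\<lfloor>f k (realvec u')\<rfloor> = \<lfloor>f k (realvec u)\<rfloor> - 1" using fu'[OF k(1)] by simp
      have f2: "1 \<le> \<lfloor>f k (realvec u)\<rfloor>" using k(2) by simp
      have "nat \<lfloor>f k (realvec u')\<rfloor> < nat \<lfloor>f k (realvec u)\<rfloor>" unfolding f1 using f2 by linarith
      thus "\<exists>j\<in>{1..m}. nat \<lfloor>f j (realvec u')\<rfloor> < nat \<lfloor>f j (realvec u)\<rfloor>" using k(1) by blast
    qed
    then obtain b c where b: "b \<in> setB m a" and bc: "(\<lambda>w. mono u' w - c * mono b w) \<in> Dsum m a l"
      using less.hyps u'M by blast
    have E: "(\<lambda>w. complex_of_real (f k (realvec w)) * mono u' w + of_nat (l k) * mono u' (w - a k)) \<in> Dsum m a l"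
      using Ek_in[OF mono_S0[OF u'M] k(1)] .
    define \<kappa> where "\<kappa> = complex_of_real (f k (realvec u'))"
    have lk: "of_nat (l k) \<noteq> (0::complex)" using lpos k(1) by simp
    have eq: "(\<lambda>w. mono u w - (- \<kappa> / of_nat (l k) * c) * mono b w) =
      (\<lambda>w. (1 / of_nat (l k)) * (complex_of_real (f k (realvec w)) * mono u' w + of_nat (l k) * mono u' (w - a k))
          + (- \<kappa> / of_nat (l k)) * (mono u' w - c * mono b w))"
    proof (rule ext)
      fix w
      have m1: "complex_of_real (f k (realvec w)) * mono u' w = \<kappa> * mono u' w" by (simp add: mono_def \<kappa>_def)
      have m2: "mono u' (w - a k) = mono u w" by (auto simp: mono_def u'_def)
      show "mono u w - (- \<kappa> / of_nat (l k) * c) * mono b w =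
        (1 / of_nat (l k)) * (complex_of_real (f k (realvec w)) * mono u' w + of_nat (l k) * mono u' (w - a k))
          + (- \<kappa> / of_nat (l k)) * (mono u' w - c * mono b w)"
        unfolding m1 m2 by (rule alg_id[OF lk])
    qed
    have "(\<lambda>w. (1 / of_nat (l k)) * (complex_of_real (f k (realvec w)) * mono u' w + of_nat (l k) * mono u' (w - a k))
          + (- \<kappa> / of_nat (l k)) * (mono u' w - c * mono b w)) \<in> Dsum m a l"
      by (rule Dsum_add[OF Dsum_scale[OF E] Dsum_scale[OF bc]])
    hence "(\<lambda>w. mono u w - (- \<kappa> / of_nat (l k) * c) * mono b w) \<in> Dsum m a l" unfolding eq .
    thus ?thesis using b by blast
  qed
qed

definition Pspan :: "(int^'n \<Rightarrow> complex) \<Rightarrow> bool" where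
  "Pspan h \<longleftrightarrow> (\<exists>c. (\<lambda>w. h w - (\<Sum>b\<in>setB m a. c b * mono b w)) \<in> Dsum m a l)"

lemma P_comb: "Pspan h1 \<Longrightarrow> Pspan h2 \<Longrightarrow> Pspan (\<lambda>w. s * h1 w + h2 w)"
proof -
  assume "Pspan h1" "Pspan h2"
  then obtain c1 c2 where c1: "(\<lambda>w. h1 w - (\<Sum>b\<in>setB m a. c1 b * mono b w)) \<in> Dsum m a l"
    and c2: "(\<lambda>w. h2 w - (\<Sum>b\<in>setB m a. c2 b * mono b w)) \<in> Dsum m a l" unfolding Pspan_def by blast
  have "(\<lambda>w. s * (h1 w - (\<Sum>b\<in>setB m a. c1 b * mono b w)) + (h2 w - (\<Sum>b\<in>setB m a. c2 b * mono b w))) \<in> Dsum m a l"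
    by (rule Dsum_add[OF Dsum_scale[OF c1] c2])
  moreover have "(\<lambda>w. s * (h1 w - (\<Sum>b\<in>setB m a. c1 b * mono b w)) + (h2 w - (\<Sum>b\<in>setB m a. c2 b * mono b w)))
     = (\<lambda>w. (s * h1 w + h2 w) - (\<Sum>b\<in>setB m a. (s * c1 b + c2 b) * mono b w))"
    by (rule ext) (simp add: sum.distrib sum_distrib_left algebra_simps)
  ultimately show ?thesis unfolding Pspan_def by auto
qed

lemma P_sum: "finite F \<Longrightarrow> (\<forall>x\<in>F. Pspan (h x)) \<Longrightarrow> Pspan (\<lambda>w. \<Sum>x\<in>F. s x * h x w)"
proof (induction F rule: finite_induct)
  case empty
  show ?case unfolding Pspan_def by (rule exI[of _ "\<lambda>b. 0"]) (simp add: Dsum_0)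
next
  case (insert x F)
  have "Pspan (\<lambda>w. s x * h x w + (\<Sum>y\<in>F. s y * h y w))"
    using insert by (intro P_comb) auto
  thus ?case using insert by simp
qed

lemma P_mono: "u \<in> monoidM m a \<Longrightarrow> Pspan (mono u)"
proof -
  assume "u \<in> monoidM m a"
  then obtain b c where b: "b \<in> setB m a" and bc: "(\<lambda>w. mono u w - c * mono b w) \<in> Dsum m a l"
    using mono_red by blast
  have e: "(\<Sum>b'\<in>setB m a. (if b' = b then c else 0) * mono b' w) = c * mono b w" for w
  proof -
    have "(\<Sum>b'\<in>setB m a. (if b' = b then c else 0) * mono b' w) = (\<Sum>b'\<in>setB m a. if b' = b then c * mono b w else 0)"
      by (rule sum.cong) auto
    thus ?thesis using b finite_B by simp
  qed
  have "(\<lambda>w. mono u w - (\<Sum>b'\<in>setB m a. (if b' = b then c else 0) * mono b' w)) = (\<lambda>w. mono u w - c * mono b w)"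
    unfolding e ..
  thus ?thesis unfolding Pspan_def using bc by (intro exI[of _ "\<lambda>b'. if b' = b then c else 0"]) simp
qed

lemma spanning: "g \<in> S0 m a \<Longrightarrow> Pspan g"
proof -
  assume g: "g \<in> S0 m a"
  let ?F = "{u. g u \<noteq> 0}"
  have fin: "finite ?F" and sub: "?F \<subseteq> monoidM m a" using g unfolding S0_def by auto
  have eqg: "(\<lambda>w. \<Sum>u\<in>?F. g u * mono u w) = g"
    by (rule ext, rule fin_expand[OF fin, symmetric]) simp
  have "Pspan (\<lambda>w. \<Sum>u\<in>?F. g u * mono u w)"
    using fin sub P_mono by (intro P_sum) auto
  thus ?thesis unfolding eqg .
qed

end

definition lsum :: "(int^'n \<Rightarrow> complex) \<Rightarrow> (int^'n \<Rightarrow> complex) \<Rightarrow> complex" where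
  "lsum W g = (\<Sum>u\<in>{u. g u \<noteq> 0}. g u * W u)"

lemma lsum_superset:
  assumes "finite F" "{u. g u \<noteq> 0} \<subseteq> F"
  shows "lsum W g = (\<Sum>u\<in>F. g u * W u)"
  unfolding lsum_def by (rule sum.mono_neutral_left[OF assms]) auto

lemma lsum_lin:
  assumes X: "finite X" and fh: "\<forall>x\<in>X. finite {u. h x u \<noteq> 0}"
  shows "lsum W (\<lambda>w. \<Sum>x\<in>X. c x * h x w) = (\<Sum>x\<in>X. c x * lsum W (h x))"
proof -
  define F where "F = (\<Union>x\<in>X. {u. h x u \<noteq> 0})"
  have finF: "finite F" unfolding F_def using X fh by blast
  have sub: "{u. (\<Sum>x\<in>X. c x * h x u) \<noteq> 0} \<subseteq> F"
  proof
    fix u assume "u \<in> {u. (\<Sum>x\<in>X. c x * h x u) \<noteq> 0}"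
    hence ne: "(\<Sum>x\<in>X. c x * h x u) \<noteq> 0" by simp
    have "\<exists>x\<in>X. c x * h x u \<noteq> 0"
    proof (rule ccontr)
      assume "\<not> (\<exists>x\<in>X. c x * h x u \<noteq> 0)"
      hence "(\<Sum>x\<in>X. c x * h x u) = 0" by (intro sum.neutral) blast
      thus False using ne by simp
    qed
    then obtain x where "x \<in> X" "c x * h x u \<noteq> 0" by blast
    thus "u \<in> F" unfolding F_def by auto
  qed
  have "lsum W (\<lambda>w. \<Sum>x\<in>X. c x * h x w) = (\<Sum>u\<in>F. (\<Sum>x\<in>X. c x * h x u) * W u)"
    by (rule lsum_superset[OF finF sub])
  also have "\<dots> = (\<Sum>u\<in>F. \<Sum>x\<in>X. c x * (h x u * W u))"
    by (simp add: sum_distrib_right mult.assoc)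
  also have "\<dots> = (\<Sum>x\<in>X. \<Sum>u\<in>F. c x * (h x u * W u))" by (rule sum.swap)
  also have "\<dots> = (\<Sum>x\<in>X. c x * lsum W (h x))"
  proof (rule sum.cong)
    fix x assume x: "x \<in> X"
    have "{u. h x u \<noteq> 0} \<subseteq> F" unfolding F_def using x by blast
    from lsum_superset[OF finF this] show "(\<Sum>u\<in>F. c x * (h x u * W u)) = c x * lsum W (h x)"
      by (simp add: sum_distrib_left)
  qed simp
  finally show ?thesis .
qed

lemma lsum_mono: "lsum W (mono v) = W v"
proof -
  have "{u. mono v u \<noteq> 0} = {v}" by (auto simp: mono_def)
  thus ?thesis unfolding lsum_def by (simp add: mono_def)
qed

lemma Dop_fin:
  assumes "finite {u. g u \<noteq> 0}"
  shows "finite {w. Dop m a l i g w \<noteq> 0}"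
proof -
  let ?S = "{u. g u \<noteq> 0}"
  have "{w. Dop m a l i g w \<noteq> 0} \<subseteq> ?S \<union> (\<Union>j\<in>{1..m}. (\<lambda>u. u + a j) ` ?S)"
  proof
    fix w assume w: "w \<in> {w. Dop m a l i g w \<noteq> 0}"
    show "w \<in> ?S \<union> (\<Union>j\<in>{1..m}. (\<lambda>u. u + a j) ` ?S)"
    proof (rule ccontr)
      assume n: "w \<notin> ?S \<union> (\<Union>j\<in>{1..m}. (\<lambda>u. u + a j) ` ?S)"
      hence g0: "g w = 0" by blast
      have "g (w - a j) = 0" if j: "j \<in> {1..m}" for j
      proof (rule ccontr)
        assume "g (w - a j) \<noteq> 0"
        hence "w \<in> (\<lambda>u. u + a j) ` ?S" by (intro image_eqI[of _ _ "w - a j"]) auto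
        thus False using n j by blast
      qed
      hence "(\<Sum>j=1..m. of_nat (l j) * of_int (a j $ i) * g (w - a j)) = 0" by (intro sum.neutral) simp
      hence "Dop m a l i g w = 0" unfolding Dop_def using g0 by simp
      thus False using w by simp
    qed
  qed
  moreover have "finite (?S \<union> (\<Union>j\<in>{1..m}. (\<lambda>u. u + a j) ` ?S))"
    using assms by (intro finite_UnI finite_UN_I finite_imageI) simp_all
  ultimately show ?thesis by (rule finite_subset)
qed

context dualctx begin

definition psi :: "nat \<Rightarrow> real \<Rightarrow> real" where
  "psi k c = (\<Prod>t<nat \<lfloor>c\<rfloor>. - (c - of_int \<lfloor>c\<rfloor> + of_nat t) / of_nat (l k))"

definition Phi :: "int^'n \<Rightarrow> real" where
  "Phi u = (\<Prod>k\<in>{1..m}. psi k (f k (realvec u)))"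

definition blk :: "int^'n \<Rightarrow> int^'n" where
  "blk u = u - (\<Sum>k=1..m. \<lfloor>f k (realvec u)\<rfloor> *s a k)"

definition Wt :: "int^'n \<Rightarrow> int^'n \<Rightarrow> complex" where
  "Wt b0 u = (if blk u = b0 then complex_of_real (Phi u) else 0)"

lemma psi_step:
  assumes "0 \<le> c"
  shows "psi k (c + 1) = - (c / of_nat (l k)) * psi k c"
proof -
  have fl: "\<lfloor>c + 1\<rfloor> = \<lfloor>c\<rfloor> + 1" by simp
  have h0: "0 \<le> \<lfloor>c\<rfloor>" using assms by simp
  have n: "nat \<lfloor>c + 1\<rfloor> = Suc (nat \<lfloor>c\<rfloor>)" using h0 by (simp add: fl nat_add_distrib)
  have r: "real (nat \<lfloor>c\<rfloor>) = of_int \<lfloor>c\<rfloor>" using assms by simp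
  have "psi k (c + 1) = (\<Prod>t<Suc (nat \<lfloor>c\<rfloor>). - (c - of_int \<lfloor>c\<rfloor> + of_nat t) / of_nat (l k))"
    unfolding psi_def n by (simp add: fl)
  also have "\<dots> = psi k c * (- (c - of_int \<lfloor>c\<rfloor> + real (nat \<lfloor>c\<rfloor>)) / of_nat (l k))"
    unfolding psi_def by simp
  also have "\<dots> = - (c / of_nat (l k)) * psi k c" unfolding r by simp
  finally show ?thesis .
qed

lemma Phi_step:
  assumes u: "u \<in> monoidM m a" and j: "j \<in> {1..m}"
  shows "Phi (u + a j) = - (f j (realvec u) / of_nat (l j)) * Phi u"
proof -
  have pos: "0 \<le> f j (realvec u)" using u j M_iff by auto
  have "Phi (u + a j) = (\<Prod>k\<in>{1..m}. psi k (f k (realvec u) + (if k = j then 1 else 0)))"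
    unfolding Phi_def
  proof (rule prod.cong)
    fix k assume k: "k \<in> {1..m}"
    show "psi k (f k (realvec (u + a j))) = psi k (f k (realvec u) + (if k = j then 1 else 0))"
      using f_add[OF k j] by simp
  qed simp
  also have "\<dots> = psi j (f j (realvec u) + 1) * (\<Prod>k\<in>{1..m} - {j}. psi k (f k (realvec u) + (if k = j then 1 else 0)))"
    using j by (simp add: prod.remove)
  also have "(\<Prod>k\<in>{1..m} - {j}. psi k (f k (realvec u) + (if k = j then 1 else 0))) = (\<Prod>k\<in>{1..m} - {j}. psi k (f k (realvec u)))"
    by (rule prod.cong) auto
  also have "psi j (f j (realvec u) + 1) = - (f j (realvec u) / of_nat (l j)) * psi j (f j (realvec u))"
    by (rule psi_step[OF pos])
  also have "Phi u = psi j (f j (realvec u)) * (\<Prod>k\<in>{1..m} - {j}. psi k (f k (realvec u)))"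
    unfolding Phi_def using j by (simp add: prod.remove)
  ultimately show ?thesis by simp
qed

lemma blk_step:
  assumes j: "j \<in> {1..m}"
  shows "blk (u + a j) = blk u"
proof -
  have "(\<Sum>k=1..m. \<lfloor>f k (realvec (u + a j))\<rfloor> *s a k) = (\<Sum>k=1..m. \<lfloor>f k (realvec u)\<rfloor> *s a k + (if k = j then a j else 0))"
  proof (rule sum.cong)
    fix k assume k: "k \<in> {1..m}"
    have "\<lfloor>f k (realvec (u + a j))\<rfloor> = \<lfloor>f k (realvec u)\<rfloor> + (if k = j then 1 else 0)"
      using f_add[OF k j] by simp
    thus "\<lfloor>f k (realvec (u + a j))\<rfloor> *s a k = \<lfloor>f k (realvec u)\<rfloor> *s a k + (if k = j then a j else 0)"
      by (simp add: vec_eq_iff algebra_simps)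
  qed simp
  also have "\<dots> = (\<Sum>k=1..m. \<lfloor>f k (realvec u)\<rfloor> *s a k) + a j"
    using j by (simp add: sum.distrib)
  finally show ?thesis unfolding blk_def by simp
qed

lemma W_step:
  assumes u: "u \<in> monoidM m a" and j: "j \<in> {1..m}"
  shows "Wt b0 (u + a j) = - (complex_of_real (f j (realvec u)) / of_nat (l j)) * Wt b0 u"
  unfolding Wt_def blk_step[OF j] Phi_step[OF u j] by simp

lemma Dop_mono_expand:
  "Dop m a l i (mono u) w = (\<Sum>x\<in>{0..m}. (if x = 0 then of_int (u $ i) else of_nat (l x) * of_int (a x $ i))
      * (if x = 0 then mono u else mono (u + a x)) w)"
proof -
  have s: "(\<Sum>x\<in>{0..m}. F x) = F 0 + (\<Sum>x\<in>{1..m}. F x)" for F :: "nat \<Rightarrow> complex"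
    by (simp add: sum.atLeast_Suc_atMost)
  have a1: "of_int (w $ i) * mono u w = of_int (u $ i) * mono u w" by (simp add: mono_def)
  have a2: "mono u (w - a x) = mono (u + a x) w" for x by (auto simp: mono_def)
  show ?thesis unfolding s Dop_def a1 a2
    by (simp add: mult.assoc)
qed

lemma lsum_Dop_mono:
  assumes u: "u \<in> monoidM m a"
  shows "lsum (Wt b0) (Dop m a l i (mono u)) = 0"
proof -
  have fin: "\<forall>x\<in>{0..m}. finite {w. (if x = 0 then mono u else mono (u + a x)) w \<noteq> 0}"
    by (auto simp: mono_def)
  have "lsum (Wt b0) (Dop m a l i (mono u)) = lsum (Wt b0) (\<lambda>w. \<Sum>x\<in>{0..m}. (if x = 0 then of_int (u $ i) else of_nat (l x) * of_int (a x $ i))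
      * (if x = 0 then mono u else mono (u + a x)) w)"
    unfolding Dop_mono_expand ..
  also have "\<dots> = (\<Sum>x\<in>{0..m}. (if x = 0 then of_int (u $ i) else of_nat (l x) * of_int (a x $ i))
      * lsum (Wt b0) (if x = 0 then mono u else mono (u + a x)))"
    by (rule lsum_lin[OF _ fin]) simp
  also have "\<dots> = (\<Sum>x\<in>{0..m}. (if x = 0 then of_int (u $ i) else of_nat (l x) * of_int (a x $ i))
      * (if x = 0 then Wt b0 u else Wt b0 (u + a x)))"
    by (rule sum.cong) (auto simp: lsum_mono)
  also have "\<dots> = of_int (u $ i) * Wt b0 u + (\<Sum>x\<in>{1..m}. of_nat (l x) * of_int (a x $ i) * Wt b0 (u + a x))"
    by (simp add: sum.atLeast_Suc_atMost)
  also have "(\<Sum>x\<in>{1..m}. of_nat (l x) * of_int (a x $ i) * Wt b0 (u + a x)) = (\<Sum>x\<in>{1..m}. - (complex_of_real (f x (realvec u)) * of_int (a x $ i) * Wt b0 u))"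
  proof (rule sum.cong)
    fix x assume x: "x \<in> {1..m}"
    have lx: "of_nat (l x) \<noteq> (0::complex)" using lpos x by simp
    show "of_nat (l x) * of_int (a x $ i) * Wt b0 (u + a x) = - (complex_of_real (f x (realvec u)) * of_int (a x $ i) * Wt b0 u)"
      unfolding W_step[OF u x] using lx by (simp add: field_simps)
  qed simp
  also have "\<dots> = - ((\<Sum>x\<in>{1..m}. complex_of_real (f x (realvec u)) * of_int (a x $ i)) * Wt b0 u)"
    by (simp add: sum_negf sum_distrib_right)
  also have "(\<Sum>x\<in>{1..m}. complex_of_real (f x (realvec u)) * of_int (a x $ i)) = of_int (u $ i)"
  proof -
    have "u \<in> VZ m a" using u M_iff by auto
    from VZ_comp[OF this, of i] have "complex_of_real (real_of_int (u $ i)) = complex_of_real (\<Sum>j=1..m. f j (realvec u) * real_of_int (a j $ i))"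
      by simp
    thus ?thesis by simp
  qed
  finally show ?thesis by simp
qed

lemma lsum_Dop:
  assumes g: "g \<in> S0 m a"
  shows "lsum (Wt b0) (Dop m a l i g) = 0"
proof -
  let ?F = "{u. g u \<noteq> 0}"
  have fin: "finite ?F" and sub: "?F \<subseteq> monoidM m a" using g unfolding S0_def by auto
  have eqg: "(\<lambda>w. \<Sum>u\<in>?F. g u * mono u w) = g"
    by (rule ext, rule fin_expand[OF fin, symmetric]) simp
  have "Dop m a l i g = (\<lambda>w. \<Sum>u\<in>?F. g u * Dop m a l i (mono u) w)"
  proof (rule ext)
    fix w
    have "Dop m a l i g w = Dop m a l i (\<lambda>v. \<Sum>u\<in>?F. g u * mono u v) w" unfolding eqg ..
    thus "Dop m a l i g w = (\<Sum>u\<in>?F. g u * Dop m a l i (mono u) w)" using Dop_sum[OF fin] by simp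
  qed
  note eqD = this
  have fins: "\<forall>u\<in>?F. finite {w. Dop m a l i (mono u) w \<noteq> 0}"
  proof
    fix u :: "int^'n"
    have "{w. mono u w \<noteq> 0} = {u}" by (auto simp: mono_def)
    thus "finite {w. Dop m a l i (mono u) w \<noteq> 0}" by (intro Dop_fin) simp
  qed
  have "lsum (Wt b0) (Dop m a l i g) = lsum (Wt b0) (\<lambda>w. \<Sum>u\<in>?F. g u * Dop m a l i (mono u) w)"
    by (rule arg_cong[OF eqD])
  also have "\<dots> = (\<Sum>u\<in>?F. g u * lsum (Wt b0) (Dop m a l i (mono u)))"
    by (rule lsum_lin[OF fin fins])
  also have "\<dots> = 0" using sub lsum_Dop_mono by (simp add: subset_iff)
  finally show ?thesis .
qed

lemma lsum_Dsum:
  assumes h: "h \<in> Dsum m a l"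
  shows "lsum (Wt b0) h = 0"
proof -
  obtain G where G: "\<forall>i. G i \<in> S0 m a" "h = (\<lambda>w. \<Sum>i\<in>UNIV. Dop m a l i (G i) w)"
    using h unfolding Dsum_iff by blast
  have fG: "\<forall>i\<in>UNIV. finite {w. Dop m a l i (G i) w \<noteq> 0}"
    using G(1) Dop_fin unfolding S0_def by blast
  have "lsum (Wt b0) h = lsum (Wt b0) (\<lambda>w. \<Sum>i\<in>UNIV. 1 * Dop m a l i (G i) w)" using G(2) by simp
  also have "\<dots> = (\<Sum>i\<in>UNIV. 1 * lsum (Wt b0) (Dop m a l i (G i)))"
    by (rule lsum_lin[OF _ fG]) simp
  also have "\<dots> = 0" using G(1) lsum_Dop by simp
  finally show ?thesis .
qed

lemma W_B:
  assumes b: "b \<in> setB m a"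
  shows "Wt b0 b = (if b = b0 then 1 else 0)"
proof -
  have fl: "\<lfloor>f k (realvec b)\<rfloor> = 0" if k: "k \<in> {1..m}" for k
    using b k B_iff by (simp add: floor_eq_iff)
  have "blk b = b" unfolding blk_def using fl by simp
  moreover have "Phi b = 1" unfolding Phi_def psi_def using fl by simp
  ultimately show ?thesis unfolding Wt_def by auto
qed

lemma independence:
  assumes "(\<lambda>w. \<Sum>b\<in>setB m a. c b * mono b w) \<in> Dsum m a l" and b0: "b0 \<in> setB m a"
  shows "c b0 = 0"
proof -
  have "0 = lsum (Wt b0) (\<lambda>w. \<Sum>b\<in>setB m a. c b * mono b w)" using lsum_Dsum[OF assms(1)] by simp
  also have "\<dots> = (\<Sum>b\<in>setB m a. c b * lsum (Wt b0) (mono b))"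
    by (rule lsum_lin[OF finite_B]) (auto simp: mono_def)
  also have "\<dots> = (\<Sum>b\<in>setB m a. if b = b0 then c b0 else 0)"
    by (rule sum.cong) (auto simp: lsum_mono W_B)
  also have "\<dots> = c b0" using b0 finite_B by simp
  finally show ?thesis by simp
qed

end

theorem proposition3p9:
  fixes m :: nat and a :: "nat \<Rightarrow> int^'n" and l :: "nat \<Rightarrow> nat" and a0 :: "int^'n"
  assumes indep: "lin_indep_family m a"
    and lpos: "\<forall>j\<in>{1..m}. 0 < l j"
    and rel: "\<forall>i. int (\<Sum>j=1..m. l j) * (a0 $ i) = (\<Sum>j=1..m. int (l j) * (a j $ i))"
    and gcd1: "Gcd (insert (\<Sum>j=1..m. l j) (l ` {1..m})) = 1"
  shows "quotient_basis (S0 m a) (Dsum m a l) (setB m a)"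
proof -
  obtain f where f: "\<forall>k\<in>{1..m}. linear (f k) \<and> (\<forall>j\<in>{1..m}. f k (realvec (a j)) = (if k = j then 1 else (0::real)))"
    using dual_exists[OF indep] by blast
  have "dualctx m a l f" unfolding dualctx_def using f lpos by blast
  then interpret dualctx m a l f .
  show ?thesis unfolding quotient_basis_def
  proof (intro conjI ballI allI impI)
    show "finite (setB m a)" by (rule finite_B)
  next
    fix g assume "g \<in> S0 m a"
    thus "\<exists>c. (\<lambda>w. g w - (\<Sum>b\<in>setB m a. c b * mono b w)) \<in> Dsum m a l"
      using spanning unfolding Pspan_def by blast
  next
    fix c b assume "(\<lambda>w. \<Sum>b\<in>setB m a. c b * mono b w) \<in> Dsum m a l" "b \<in> setB m a"
    thus "c b = 0" by (rule independence)
  qed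
qed

end
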